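(* Let $M\subset X$ be nonempty, $F:X\rightrightarrows Y$ with nonempty values, and $\bar x\in M\cap M'$ such that $F(\bar x)$ is $K$-sequentially compact and $\bar x$ is a local ideal minimum for $F$ on $M$. Suppose there are $e\in K\setminus\{0\}$, $r>0$, $\ell>0$ such that for all $u\in(X\setminus M)\cap B(\bar x,r)$ and $v\in M\cap B(\bar x,r)$, $$F(u)+\ell\|u-v\|e\subset F(v)+K.$$ Then $\bar x$ is a local ideal minimum on $X$ (i.e., without constraints) for the set-valued map $G:X\rightrightarrows Y$, $G(x)=F(x)+\ell d_M(x)e$.
   Context: $X,Y$ are real normed spaces, $K\subset Y$ a pointed closed convex cone, $B(x,r)$ the open ball, $M'$ the set of accumulation points of $M$, $d_M(x)=\inf_{m\in M}\|x-m\|$. A nonempty $A\subset Y$ is $K$-sequentially compact if for every $(a_n)\subset A$ there is $(c_n)\subset K$ such that $(a_n-c_n)$ has a subsequence converging to an element of $A$. For nonempty $S\subset X$, $\bar x\in S$ is a local ideal minimum for $F$ on $S$ if there is $\varepsilon>0$ such that $F(\bar x)\not\subset F(x)+(Y\setminus -K)$ for all $x\in S\cap B(\bar x,\varepsilon)\setminus\{\bar x\}$; "on $X$" means $S=X$. *)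

theory Defs
  imports "HOL-Analysis.Analysis"
begin

definition pointed_closed_convex_cone :: "'b::real_normed_vector set \<Rightarrow> bool" where
  "pointed_closed_convex_cone K \<longleftrightarrow>
     K \<noteq> {} \<and> cone K \<and> convex K \<and> closed K \<and> K \<inter> uminus ` K = {0}"

definition setplus :: "'b::real_normed_vector set \<Rightarrow> 'b set \<Rightarrow> 'b set" where
  "setplus A B = {a + b | a b. a \<in> A \<and> b \<in> B}"

definition K_seq_compact :: "'b::real_normed_vector set \<Rightarrow> 'b set \<Rightarrow> bool" where
  "K_seq_compact K A \<longleftrightarrow> A \<noteq> {} \<and>
     (\<forall>a::nat \<Rightarrow> 'b. (\<forall>n. a n \<in> A) \<longrightarrow>
        (\<exists>c::nat \<Rightarrow> 'b. (\<forall>n. c n \<in> K) \<and>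
           (\<exists>s y. strict_mono s \<and> y \<in> A \<and> ((\<lambda>n. a (s n) - c (s n)) \<longlonglongrightarrow> y))))"

definition local_ideal_min ::
  "'b::real_normed_vector set \<Rightarrow> ('a::real_normed_vector \<Rightarrow> 'b set) \<Rightarrow> 'a set \<Rightarrow> 'a \<Rightarrow> bool" where
  "local_ideal_min K F S xbar \<longleftrightarrow> xbar \<in> S \<and>
     (\<exists>\<epsilon>>0. \<forall>x \<in> S \<inter> ball xbar \<epsilon> - {xbar}.
        \<not> (F xbar \<subseteq> setplus (F x) (UNIV - uminus ` K)))"

end

theory Submission
  imports Defs
begin

lemma infdist_approx:
  fixes x :: "'a::metric_space"
  assumes "A \<noteq> {}" "t > 0"
  shows "\<exists>a\<in>A. dist x a < infdist x A + t"
proof (rule ccontr)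
  assume "\<not> ?thesis"
  hence "\<forall>a\<in>A. infdist x A + t \<le> dist x a" by (auto simp: not_less)
  hence "infdist x A + t \<le> (INF a\<in>A. dist x a)"
    by (intro cINF_greatest[OF assms(1)]) auto
  thus False using assms(2) infdist_notempty[OF assms(1), of x] by simp
qed

lemma notin_setplus_iff:
  "y \<notin> setplus A (UNIV - uminus ` K) \<longleftrightarrow> (\<forall>a\<in>A. a - y \<in> K)"
proof
  assume h: "y \<notin> setplus A (UNIV - uminus ` K)"
  show "\<forall>a\<in>A. a - y \<in> K"
  proof
    fix a assume a: "a \<in> A"
    show "a - y \<in> K"
    proof (rule ccontr)
      assume "a - y \<notin> K"
      have "y - a \<notin> uminus ` K"
      proof
        assume "y - a \<in> uminus ` K"
        then obtain k where "k \<in> K" "y - a = - k" by auto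
        hence "a - y = k" by (simp add: algebra_simps)
        with \<open>k \<in> K\<close> \<open>a - y \<notin> K\<close> show False by simp
      qed
      hence "y \<in> setplus A (UNIV - uminus ` K)" unfolding setplus_def using a
        by (intro CollectI exI[of _ a] exI[of _ "y - a"]) auto
      with h show False by simp
    qed
  qed
next
  assume h: "\<forall>a\<in>A. a - y \<in> K"
  show "y \<notin> setplus A (UNIV - uminus ` K)"
  proof
    assume "y \<in> setplus A (UNIV - uminus ` K)"
    then obtain a w where "a \<in> A" "w \<notin> uminus ` K" "y = a + w"
      unfolding setplus_def by auto
    have w: "w = - (a - y)" using \<open>y = a + w\<close> by simp
    have "a - y \<in> K" using h \<open>a \<in> A\<close> by blast
    hence "w \<in> uminus ` K" unfolding w by (rule imageI)
    with \<open>w \<notin> uminus ` K\<close> show False by contradiction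
  qed
qed

theorem mainTheorem15:
  fixes K :: "'b::real_normed_vector set"
    and F :: "'a::real_normed_vector \<Rightarrow> 'b set"
    and M :: "'a set" and xbar :: 'a and e :: 'b and r l :: real
  assumes K: "pointed_closed_convex_cone K"
    and M_ne: "M \<noteq> {}"
    and F_ne: "\<And>x. F x \<noteq> {}"
    and xM: "xbar \<in> M" and xacc: "xbar islimpt M"
    and cpt: "K_seq_compact K (F xbar)"
    and lmin: "local_ideal_min K F M xbar"
    and e: "e \<in> K - {0}" and r: "r > 0" and l: "l > 0"
    and pen: "\<And>u v. u \<in> (UNIV - M) \<inter> ball xbar r \<Longrightarrow> v \<in> M \<inter> ball xbar r \<Longrightarrow>
                 (\<lambda>y. y + (l * norm (u - v)) *\<^sub>R e) ` F u \<subseteq> setplus (F v) K"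
  shows "local_ideal_min K (\<lambda>x. (\<lambda>y. y + (l * infdist x M) *\<^sub>R e) ` F x) UNIV xbar"
proof -
  have Kcl: "closed K" and Kcone: "cone K" and Kcv: "convex K" using K
    unfolding pointed_closed_convex_cone_def by auto
  have Kadd: "a + b \<in> K" if "a \<in> K" "b \<in> K" for a b
  proof -
    have "(1/2::real) *\<^sub>R a + (1/2::real) *\<^sub>R b \<in> K"
      using Kcv that unfolding convex_def by auto
    hence "(2::real) *\<^sub>R ((1/2::real) *\<^sub>R a + (1/2::real) *\<^sub>R b) \<in> K"
      using Kcone unfolding cone_def by auto
    thus ?thesis by (simp add: scaleR_add_right)
  qed
  from lmin obtain \<epsilon>0 where e0: "\<epsilon>0 > 0" and
    mn: "\<And>x. x \<in> M \<inter> ball xbar \<epsilon>0 - {xbar} \<Longrightarrow>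
           \<not> (F xbar \<subseteq> setplus (F x) (UNIV - uminus ` K))"
    unfolding local_ideal_min_def by blast
  have mn': "\<exists>y\<in>F xbar. \<forall>f\<in>F x. f - y \<in> K" if "x \<in> M" "dist xbar x < \<epsilon>0" "x \<noteq> xbar" for x
  proof -
    from mn[of x] that obtain y where "y \<in> F xbar" "y \<notin> setplus (F x) (UNIV - uminus ` K)"
      by auto
    thus ?thesis using notin_setplus_iff by blast
  qed
  define \<epsilon>1 where "\<epsilon>1 = min r \<epsilon>0"
  have e1: "\<epsilon>1 > 0" "\<epsilon>1 \<le> r" "\<epsilon>1 \<le> \<epsilon>0" using e0 r unfolding \<epsilon>1_def by auto
  show ?thesis
    unfolding local_ideal_min_def
  proof (intro conjI exI[of _ "\<epsilon>1/2"] ballI)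
    show "xbar \<in> UNIV" by simp
    show "\<epsilon>1/2 > 0" using e1 by simp
    fix x assume x: "x \<in> UNIV \<inter> ball xbar (\<epsilon>1/2) - {xbar}"
    hence dx: "dist xbar x < \<epsilon>1/2" and xne: "x \<noteq> xbar" by auto
    have Gx: "(\<lambda>y. y + (l * infdist xbar M) *\<^sub>R e) ` F xbar = F xbar" using xM by simp
    define d where "d = infdist x M"
    have "\<exists>y\<in>F xbar. \<forall>z\<in>F x. z + (l * d) *\<^sub>R e - y \<in> K"
    proof (cases "x \<in> M")
      case True
      hence "d = 0" unfolding d_def by simp
      have "dist xbar x < \<epsilon>0" using dx e1 by linarith
      then obtain y where "y \<in> F xbar" "\<forall>f\<in>F x. f - y \<in> K" using mn'[OF True _ xne] by blast
      thus ?thesis using \<open>d = 0\<close> by auto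
    next
      case False
      have approx: "\<exists>v. v \<in> M \<and> v \<noteq> xbar \<and> dist xbar v < \<epsilon>1 \<and> norm (x - v) < d + \<delta>"
        if "\<delta> > 0" for \<delta>
      proof -
        define t where "t = min \<delta> (\<epsilon>1 - 2 * dist xbar x)"
        have t: "t > 0" "t \<le> \<delta>" "t \<le> \<epsilon>1 - 2 * dist xbar x" using that dx unfolding t_def by auto
        obtain m where m: "m \<in> M" "dist x m < d + t/2"
          using infdist_approx[OF M_ne, of "t/2" x] t unfolding d_def by auto
        have dle: "d \<le> dist x xbar" unfolding d_def using infdist_le[OF xM] .
        show ?thesis
        proof (cases "m = xbar")
          case False
          have "dist xbar m \<le> dist xbar x + dist x m" by (rule dist_triangle)
          also have "\<dots> < \<epsilon>1" using m dle t by (simp add: dist_commute)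
          finally show ?thesis using m False t by (auto simp: dist_norm)
        next
          case True
          obtain v where v: "v \<in> M" "v \<noteq> xbar" "dist v xbar < t/2"
            using xacc t unfolding islimpt_approachable by (metis half_gt_zero)
          have "norm (x - v) \<le> dist x xbar + dist v xbar"
            by (metis dist_norm dist_triangle2)
          also have "\<dots> < d + t" using m True v by simp
          finally have "norm (x - v) < d + \<delta>" using t by simp
          moreover have "dist xbar v < \<epsilon>1"
          proof -
            have "0 \<le> dist xbar x" by simp
            moreover have "dist xbar v = dist v xbar" by (rule dist_commute)
            ultimately show ?thesis using v(3) t by linarith
          qed
          ultimately show ?thesis using v by blast
        qed
      qed
      have "\<forall>n. \<exists>v. v \<in> M \<and> v \<noteq> xbar \<and> dist xbar v < \<epsilon>1 \<and> norm (x - v) < d + 1/(Suc n)"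
        using approx by simp
      then obtain v where v0: "\<forall>n. v n \<in> M \<and> v n \<noteq> xbar \<and> dist xbar (v n) < \<epsilon>1 \<and> norm (x - v n) < d + 1/(Suc n)"
        using choice[where Q="\<lambda>n v. v \<in> M \<and> v \<noteq> xbar \<and> dist xbar v < \<epsilon>1 \<and> norm (x - v) < d + 1/(Suc n)"] by blast
      have v: "\<And>n. v n \<in> M" "\<And>n. v n \<noteq> xbar" "\<And>n. dist xbar (v n) < \<epsilon>1"
        "\<And>n. norm (x - v n) < d + 1/(Suc n)" using v0 by auto
      have vlow: "d \<le> norm (x - v n)" for n
        unfolding d_def using infdist_le[OF v(1)[of n], of x] by (simp add: dist_norm)
      have "\<forall>n. \<exists>y. y \<in> F xbar \<and> (\<forall>f\<in>F (v n). f - y \<in> K)"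
      proof
        fix n
        have "dist xbar (v n) < \<epsilon>0" using v(3)[of n] e1 by linarith
        thus "\<exists>y. y \<in> F xbar \<and> (\<forall>f\<in>F (v n). f - y \<in> K)" using mn'[OF v(1) _ v(2)] by blast
      qed
      then obtain yn where yn0: "\<forall>n. yn n \<in> F xbar \<and> (\<forall>f\<in>F (v n). f - yn n \<in> K)"
        using choice[where Q="\<lambda>n y. y \<in> F xbar \<and> (\<forall>f\<in>F (v n). f - y \<in> K)"] by blast
      have yn: "\<And>n. yn n \<in> F xbar" "\<And>n f. f \<in> F (v n) \<Longrightarrow> f - yn n \<in> K"
        using yn0 by auto
      have "\<exists>c. (\<forall>n. c n \<in> K) \<and> (\<exists>s y. strict_mono s \<and> y \<in> F xbar \<and> ((\<lambda>n. yn (s n) - c (s n)) \<longlonglongrightarrow> y))"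
        using cpt yn(1) unfolding K_seq_compact_def by blast
      then obtain c s y where c: "\<And>n. c n \<in> K" and s: "strict_mono s"
        and y: "y \<in> F xbar" and lim: "(\<lambda>n. yn (s n) - c (s n)) \<longlonglongrightarrow> y"
        by blast
      have nlim: "(\<lambda>n. norm (x - v n)) \<longlonglongrightarrow> d"
      proof (rule real_tendsto_sandwich[of "\<lambda>n. d" _ _ "\<lambda>n. d + 1/(Suc n)"])
        show "\<forall>\<^sub>F n in sequentially. d \<le> norm (x - v n)" by (intro always_eventually allI vlow)
        show "\<forall>\<^sub>F n in sequentially. norm (x - v n) \<le> d + 1/(Suc n)"
          by (intro always_eventually allI less_imp_le v(4))
        show "(\<lambda>n. d) \<longlonglongrightarrow> d" by simp
        show "(\<lambda>n. d + 1/(Suc n)) \<longlonglongrightarrow> d"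
          using tendsto_add[OF tendsto_const[of d] LIMSEQ_inverse_real_of_nat]
          by (simp add: inverse_eq_divide)
      qed
      show ?thesis
      proof (intro bexI[OF _ y] ballI)
        fix z assume z: "z \<in> F x"
        have xin: "x \<in> (UNIV - M) \<inter> ball xbar r" using False dx e1 by auto
        have mem: "z + (l * norm (x - v n)) *\<^sub>R e - (yn n - c n) \<in> K" for n
        proof -
          have vin: "v n \<in> M \<inter> ball xbar r" proof -
            have "dist xbar (v n) < r" using v(3)[of n] e1 by linarith
            thus ?thesis using v(1)[of n] by simp
          qed
          have "z + (l * norm (x - v n)) *\<^sub>R e \<in> setplus (F (v n)) K"
            using pen[OF xin vin] z by auto
          then obtain f k where fk: "f \<in> F (v n)" "k \<in> K" "z + (l * norm (x - v n)) *\<^sub>R e = f + k"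
            unfolding setplus_def by auto
          have "(f - yn n) + k + c n \<in> K" using Kadd yn(2)[OF fk(1)] fk(2) c by blast
          moreover have "(f - yn n) + k + c n = z + (l * norm (x - v n)) *\<^sub>R e - (yn n - c n)"
            using fk(3) by (simp add: algebra_simps)
          ultimately show ?thesis by simp
        qed
        have lim2: "(\<lambda>n. z + (l * norm (x - v (s n))) *\<^sub>R e - (yn (s n) - c (s n)))
                      \<longlonglongrightarrow> z + (l * d) *\<^sub>R e - y"
        proof -
          have nl: "(\<lambda>n. norm (x - v (s n))) \<longlonglongrightarrow> d"
            using LIMSEQ_subseq_LIMSEQ[OF nlim s] by (simp add: o_def)
          show ?thesis
            by (rule tendsto_diff[OF tendsto_add[OF tendsto_const tendsto_scaleR[OF tendsto_mult[OF tendsto_const nl] tendsto_const]] lim])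
        qed
        show "z + (l * d) *\<^sub>R e - y \<in> K"
          by (rule closed_sequentially[OF Kcl _ lim2]) (rule mem)
      qed
    qed
    then obtain y where y: "y \<in> F xbar" "\<forall>z\<in>F x. z + (l * d) *\<^sub>R e - y \<in> K" by blast
    have "y \<notin> setplus ((\<lambda>y. y + (l * infdist x M) *\<^sub>R e) ` F x) (UNIV - uminus ` K)"
      using y(2) unfolding notin_setplus_iff d_def by auto
    thus "\<not> (\<lambda>y. y + (l * infdist xbar M) *\<^sub>R e) ` F xbar
            \<subseteq> setplus ((\<lambda>y. y + (l * infdist x M) *\<^sub>R e) ` F x) (UNIV - uminus ` K)"
      using Gx y(1) by auto
  qed
qed

end
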